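(* Let $\mathcal{V}$ be a finite set of nodes, $\mathcal{F}$ a finite set of flows, each flow $f$ with rate $\lambda_f>0$ and path node set $\mathcal{V}_f\subseteq\mathcal{V}$, each node $v$ with capacity $c_v>0$, and assume $\max_f\lambda_f\le\min_v c_v$. Fix $\mathcal{U}\subseteq\mathcal{V}$ and let $OPT(Q2,\mathcal{U})$ be the optimal value of the relaxed allocation problem Q2 for $\mathcal{U}$ (defined in the context). Let $\pi_{\mathrm{MCA}}^{\mathcal{U}}$ be the total rate of the flows fully assigned to the nodes of $\mathcal{U}$ by the MCA algorithm (defined in the context). Then $\pi_{\mathrm{MCA}}^{\mathcal{U}}\ge\frac12\,OPT(Q2,\mathcal{U})$.
   Context: Problem Q2 for $\mathcal{U}$: maximize $\sum_{f\in\mathcal{F}}\sum_{v\in\mathcal{V}_f\cap\mathcal{U}}\lambda_f^v$ over nonnegative $(\lambda_f^v)$ subject to $\sum_{f}\lambda_f^v\le c_v$ for $v\in\mathcal{U}$, $\lambda_f^v=0$ for $v\notin\mathcal{U}$, and $\sum_{v\in\mathcal{U}}\lambda_f^v\le\lambda_f$ for all $f$. Write $\mathcal{U}_f=\mathcal{V}_f\cap\mathcal{U}$ and $\mathcal{F}_{\mathcal{U}}=\{f:\mathcal{U}_f\ne\emptyset\}$. A flow is fully assigned if parts of it summing to $\lambda_f$ are assigned to nodes of $\mathcal{U}_f$, without exceeding node capacities. MCA algorithm. Phase I: compute an optimal basic (extreme-point) solution $\boldsymbol{\lambda}_{\mathcal{U}}$ of Q2 and set $y_f^v=\lambda_f^v/\lambda_f$.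 Assign (fully, temporarily) each flow $f$ with $y_f^v=1$ to node $v$. Build the bipartite graph $G'$ having an edge $(f,v)$ of weight $y_f^v$ for each pair with $0<y_f^v<1$ (it is a forest). While $G'$ is nonempty: Step 1: while some node $v$ of $G'$ has exactly one incident edge $(f,v)$, let $r'_v$ be the total rate of flows currently fully assigned to $v$; if $r'_v\ge\lambda_f^v$ set $y_f^v=0$ and delete $v$ from $G'$; otherwise unassign the flows currently fully assigned to $v$, assign $f$ entirely to $v$ ($y_f^v=1$, cancelling all other fractions of $f$), and delete $v$, $f$ and their incident edges. Step 2: pick a node $v_1$ of $G'$ of degree at least two, two distinct incident edges of $v_1$, and the longest paths $p_1,p_2$ in $G'$ starting at $v_1$ through these edges; perturb the edge weights along $p_1$ and $p_2$ so that the rate changes $\lambda_f\Delta y_f^v$ on successive edges are $+\delta,-\delta,+\delta,\dots$ along $p_1$ and $-\delta,+\delta,-\delta,\dots$ along $p_2$ (starting at $v_1$), which preserves node loads, flow totals at interior vertices and the total assigned traffic; increase $\delta$ until some weight becomes $0$ or $1$, remove edges with weight $0$, and fully assign $f$ to $v$ when $y_f^v=1$; then return to Step 1. Phase II: for each flow of $\mathcal{F}_{\mathcal{U}}$ not yet assigned, if the total remaining capacity of the nodes in $\mathcal{U}_f$ is at least $\lambda_f$, split $f$ and fully assign it to a subset of $\mathcal{U}_f$ using remaining capacities. *)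

theory Defs
  imports Main "HOL-Library.Extended_Real" Complex_Main
begin

text \<open>An allocation x f v stands for the rate lambda_f^v of flow f assigned to node v.
  Only pairs with f in F and v in U intersected with V_f may carry traffic.\<close>

definition feasible_Q2 ::
  "'f set \<Rightarrow> 'v set \<Rightarrow> ('f \<Rightarrow> 'v set) \<Rightarrow> ('f \<Rightarrow> real) \<Rightarrow> ('v \<Rightarrow> real)
   \<Rightarrow> ('f \<Rightarrow> 'v \<Rightarrow> real) \<Rightarrow> bool" where
  "feasible_Q2 F U Vf lam c x \<longleftrightarrow>
     (\<forall>f v. 0 \<le> x f v) \<and>
     (\<forall>f v. (f \<notin> F \<or> v \<notin> U \<or> v \<notin> Vf f) \<longrightarrow> x f v = 0) \<and>
     (\<forall>v\<in>U. (\<Sum>f\<in>F. x f v) \<le> c v) \<and>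
     (\<forall>f\<in>F. (\<Sum>v\<in>U. x f v) \<le> lam f)"

definition obj_Q2 :: "'f set \<Rightarrow> 'v set \<Rightarrow> ('f \<Rightarrow> 'v set) \<Rightarrow> ('f \<Rightarrow> 'v \<Rightarrow> real) \<Rightarrow> real" where
  "obj_Q2 F U Vf x = (\<Sum>f\<in>F. \<Sum>v\<in>Vf f \<inter> U. x f v)"

definition OPT_Q2 ::
  "'f set \<Rightarrow> 'v set \<Rightarrow> ('f \<Rightarrow> 'v set) \<Rightarrow> ('f \<Rightarrow> real) \<Rightarrow> ('v \<Rightarrow> real) \<Rightarrow> real" where
  "OPT_Q2 F U Vf lam c = Sup (obj_Q2 F U Vf ` {x. feasible_Q2 F U Vf lam c x})"

definition optimal_Q2 where
  "optimal_Q2 F U Vf lam c x \<longleftrightarrow> feasible_Q2 F U Vf lam c x \<and>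
     (\<forall>x'. feasible_Q2 F U Vf lam c x' \<longrightarrow> obj_Q2 F U Vf x' \<le> obj_Q2 F U Vf x)"

definition extreme_Q2 where
  "extreme_Q2 F U Vf lam c x \<longleftrightarrow> feasible_Q2 F U Vf lam c x \<and>
     (\<forall>y z (t::real). feasible_Q2 F U Vf lam c y \<longrightarrow> feasible_Q2 F U Vf lam c z \<longrightarrow>
        0 < t \<longrightarrow> t < 1 \<longrightarrow> x = (\<lambda>f v. t * y f v + (1 - t) * z f v) \<longrightarrow> y = z)"

text \<open>The state of Phase I is the weight function y.  Flow f is fully (temporarily)
  assigned to v iff y f v = 1; the edges of G' are the pairs with 0 < y f v < 1.\<close>

definition mca_edges :: "'f set \<Rightarrow> 'v set \<Rightarrow> ('f \<Rightarrow> 'v \<Rightarrow> real) \<Rightarrow> ('f \<times> 'v) set" where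
  "mca_edges F U y = {(f, v). f \<in> F \<and> v \<in> U \<and> 0 < y f v \<and> y f v < 1}"

definition mca_load :: "'f set \<Rightarrow> ('f \<Rightarrow> real) \<Rightarrow> ('f \<Rightarrow> 'v \<Rightarrow> real) \<Rightarrow> 'v \<Rightarrow> real" where
  "mca_load F lam y v = (\<Sum>f\<in>{f\<in>F. y f v = 1}. lam f)"

definition mca_leaf where
  "mca_leaf F U y f v \<longleftrightarrow> {g. (g, v) \<in> mca_edges F U y} = {f}"

definition mca_step1 ::
  "'f set \<Rightarrow> 'v set \<Rightarrow> ('f \<Rightarrow> real) \<Rightarrow> ('f \<Rightarrow> 'v \<Rightarrow> real) \<Rightarrow> ('f \<Rightarrow> 'v \<Rightarrow> real) \<Rightarrow> bool" where
  "mca_step1 F U lam y y' \<longleftrightarrow>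
     (\<exists>f v. v \<in> U \<and> mca_leaf F U y f v \<and>
        (if lam f * y f v \<le> mca_load F lam y v
         then y' = y(f := (y f)(v := 0))
         else y' = (\<lambda>g w. if g = f then (if w = v then 1 else 0)
                          else if w = v \<and> y g v = 1 then 0 else y g w)))"

text \<open>Paths in G' starting at node v1, given as the list of their edges:
  v1 - f1 - v2 - f2 - ...; consecutive edges share alternately the flow and the node.\<close>
definition mca_path :: "'f set \<Rightarrow> 'v set \<Rightarrow> ('f \<Rightarrow> 'v \<Rightarrow> real) \<Rightarrow> 'v \<Rightarrow> ('f \<times> 'v) list \<Rightarrow> bool" where
  "mca_path F U y v1 p \<longleftrightarrow> p \<noteq> [] \<and> snd (hd p) = v1 \<and> distinct p \<and>
     set p \<subseteq> mca_edges F U y \<and>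
     (\<forall>i. Suc i < length p \<longrightarrow>
        (if even i then fst (p ! i) = fst (p ! Suc i) else snd (p ! i) = snd (p ! Suc i)))"

definition mca_longest_path where
  "mca_longest_path F U y v1 e p \<longleftrightarrow> mca_path F U y v1 p \<and> hd p = e \<and>
     (\<forall>q. mca_path F U y v1 q \<and> hd q = e \<longrightarrow> length q \<le> length p)"

text \<open>Rate changes +d,-d,+d,... along p1 and -d,+d,-d,... along p2; weights change by
  rate change divided by lam f.\<close>
definition mca_perturb ::
  "('f \<Rightarrow> real) \<Rightarrow> ('f \<Rightarrow> 'v \<Rightarrow> real) \<Rightarrow> real \<Rightarrow> ('f \<times> 'v) list \<Rightarrow> ('f \<times> 'v) list
   \<Rightarrow> ('f \<Rightarrow> 'v \<Rightarrow> real)" where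
  "mca_perturb lam y d p1 p2 = (\<lambda>f v. y f v +
     ((\<Sum>i<length p1. if p1 ! i = (f, v) then (-1) ^ i * d else 0) +
      (\<Sum>i<length p2. if p2 ! i = (f, v) then - ((-1) ^ i * d) else 0)) / lam f)"

definition mca_step2 ::
  "'f set \<Rightarrow> 'v set \<Rightarrow> ('f \<Rightarrow> real) \<Rightarrow> ('f \<Rightarrow> 'v \<Rightarrow> real) \<Rightarrow> ('f \<Rightarrow> 'v \<Rightarrow> real) \<Rightarrow> bool" where
  "mca_step2 F U lam y y' \<longleftrightarrow>
     (\<forall>f v. \<not> mca_leaf F U y f v) \<and>
     (\<exists>v1 f1 f2 p1 p2 d. f1 \<noteq> f2 \<and>
        mca_longest_path F U y v1 (f1, v1) p1 \<and> mca_longest_path F U y v1 (f2, v1) p2 \<and>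
        0 < d \<and> y' = mca_perturb lam y d p1 p2 \<and>
        (\<forall>(f, v) \<in> set p1 \<union> set p2. 0 \<le> y' f v \<and> y' f v \<le> 1) \<and>
        (\<exists>(f, v) \<in> set p1 \<union> set p2. y' f v = 0 \<or> y' f v = 1))"

definition mca_phase1_step where
  "mca_phase1_step F U lam y y' \<longleftrightarrow> mca_step1 F U lam y y' \<or> mca_step2 F U lam y y'"

definition mca_phase1 ::
  "'f set \<Rightarrow> 'v set \<Rightarrow> ('f \<Rightarrow> real) \<Rightarrow> ('f \<Rightarrow> 'v \<Rightarrow> real) \<Rightarrow> ('f \<Rightarrow> 'v \<Rightarrow> real) \<Rightarrow> bool" where
  "mca_phase1 F U lam x y \<longleftrightarrow>
     (mca_phase1_step F U lam)\<^sup>*\<^sup>* (\<lambda>f v. x f v / lam f) y \<and> mca_edges F U y = {}"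

text \<open>mca_phase2 U Vf lam fs rem S rem' S': processing the flows fs in order, starting with
  remaining capacities rem and set of fully assigned flows S, ends with rem' and S'.\<close>
inductive mca_phase2 ::
  "'v set \<Rightarrow> ('f \<Rightarrow> 'v set) \<Rightarrow> ('f \<Rightarrow> real) \<Rightarrow> 'f list \<Rightarrow> ('v \<Rightarrow> real) \<Rightarrow> 'f set
   \<Rightarrow> ('v \<Rightarrow> real) \<Rightarrow> 'f set \<Rightarrow> bool"
  for U Vf lam where
  nil: "mca_phase2 U Vf lam [] rem S rem S"
| skip: "(\<Sum>v\<in>Vf f \<inter> U. rem v) < lam f \<Longrightarrow> mca_phase2 U Vf lam fs rem S rem' S'
         \<Longrightarrow> mca_phase2 U Vf lam (f # fs) rem S rem' S'"
| assign: "lam f \<le> (\<Sum>v\<in>Vf f \<inter> U. rem v) \<Longrightarrow>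
           (\<forall>v. 0 \<le> a v \<and> a v \<le> rem v) \<Longrightarrow> (\<forall>v. v \<notin> Vf f \<inter> U \<longrightarrow> a v = 0) \<Longrightarrow>
           (\<Sum>v\<in>Vf f \<inter> U. a v) = lam f \<Longrightarrow>
           mca_phase2 U Vf lam fs (\<lambda>v. rem v - a v) (insert f S) rem' S'
         \<Longrightarrow> mca_phase2 U Vf lam (f # fs) rem S rem' S'"

end

theory Submission imports Defs begin

lemma alt_sum_aux:
  fixes h :: "nat \<Rightarrow> real"
  assumes "\<forall>i. a \<le> i \<and> Suc i < a + Suc m \<and> even (i + k) \<longrightarrow> h i = h (Suc i)"
  shows "(\<Sum>i\<in>{a..<a + Suc m}. (-1)^i * h i) =
    (if odd (a+k) then (-1)^a * h a else 0) + (if even (a + m + k) then (-1)^(a+m) * h (a+m) else 0)"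
  using assms
proof (induction m)
  case 0
  then show ?case by auto
next
  case (Suc m)
  have IH: "(\<Sum>i\<in>{a..<a + Suc m}. (-1)^i * h i) =
    (if odd (a+k) then (-1)^a * h a else 0) + (if even (a + m + k) then (-1)^(a+m) * h (a+m) else 0)"
    using Suc by auto
  have split: "(\<Sum>i\<in>{a..<a + Suc (Suc m)}. (-1)^i * h i) = (\<Sum>i\<in>{a..<a + Suc m}. (-1)^i * h i) + (-1)^(a + Suc m) * h (a + Suc m)"
    by simp
  show ?case
  proof (cases "even (a + Suc m + k)")
    case True
    then have "\<not> even (a + m + k)" by auto
    then show ?thesis using split IH True by simp
  next
    case False
    then have ev: "even (a + m + k)" by auto
    have "h (a+m) = h (Suc (a+m))" using Suc.prems ev by auto
    then have "(-1)^(a+m) * h (a+m) + (-1)^(a + Suc m) * h (a + Suc m) = 0" by simp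
    then show ?thesis using split IH False ev by simp
  qed
qed

lemma alt_sum:
  fixes h :: "nat \<Rightarrow> real"
  assumes "a < b" and "\<forall>i. a \<le> i \<and> Suc i < b \<and> even (i + k) \<longrightarrow> h i = h (Suc i)"
  shows "(\<Sum>i\<in>{a..<b}. (-1)^i * h i) =
    (if odd (a+k) then (-1)^a * h a else 0) + (if even (b - 1 + k) then (-1)^(b-1) * h (b-1) else 0)"
proof -
  obtain m where b: "b = a + Suc m" using assms(1) less_iff_Suc_add by (metis add_Suc_right)
  have "b - 1 = a + m" using b by simp
  then show ?thesis using alt_sum_aux[of a m k h] assms b by simp
qed

locale mca =
  fixes F :: "'f set" and U :: "'v set" and Vf :: "'f \<Rightarrow> 'v set"
    and lam :: "'f \<Rightarrow> real" and c :: "'v \<Rightarrow> real" and x :: "'f \<Rightarrow> 'v \<Rightarrow> real"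
  assumes finF: "finite F" and finU: "finite U" and lampos: "\<forall>f\<in>F. 0 < lam f"
    and ext: "extreme_Q2 F U Vf lam c x"
begin

lemma feas: "feasible_Q2 F U Vf lam c x" using ext unfolding extreme_Q2_def by blast

lemma supp: "0 < x f v \<Longrightarrow> f \<in> F \<and> v \<in> U \<and> v \<in> Vf f"
proof -
  assume h: "0 < x f v"
  have z: "\<forall>f v. (f \<notin> F \<or> v \<notin> U \<or> v \<notin> Vf f) \<longrightarrow> x f v = 0"
    using feas unfolding feasible_Q2_def by blast
  show ?thesis using z h by (metis less_irrefl)
qed

lemma no_cycle:
  assumes dist: "distinct p" and sub: "\<forall>e\<in>set p. 0 < x (fst e) (snd e)"
    and ab: "a < b" "b \<le> length p"
    and fl: "\<forall>g. (\<Sum>i\<in>{a..<b}. (-1)^i * (if fst (p!i) = g then 1 else 0)) = (0::real)"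
    and nd: "\<forall>v. (\<Sum>i\<in>{a..<b}. (-1)^i * (if snd (p!i) = v then 1 else 0)) = (0::real)"
  shows False
proof -
  define D where "D f v = (\<Sum>i\<in>{a..<b}. if p!i = (f,v) then (-1::real)^i else 0)" for f v
  have Dzero: "D f v = 0" if "(f,v) \<notin> set p" for f v
    unfolding D_def using that ab by (auto intro!: sum.neutral) (metis nth_mem order_less_le_trans)
  have Dabs: "\<bar>D f v\<bar> \<le> 1" for f v
  proof -
    let ?T = "{i\<in>{a..<b}. p!i = (f,v)}"
    have "D f v = (\<Sum>i\<in>?T. (-1::real)^i)" unfolding D_def
      by (rule sum.inter_filter[symmetric]) simp
    then have "\<bar>D f v\<bar> = \<bar>\<Sum>i\<in>?T. (-1::real)^i\<bar>" by simp
    also have "\<dots> \<le> (\<Sum>i\<in>?T. \<bar>(-1::real)^i\<bar>)" by (rule sum_abs)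
    also have "\<dots> = real (card ?T)" by simp
    also have "card ?T \<le> Suc 0"
    proof (subst card_le_Suc0_iff_eq)
      show "finite ?T" by simp
      show "\<forall>a1\<in>?T. \<forall>a2\<in>?T. a1 = a2"
      proof (intro ballI)
        fix a1 a2 assume "a1 \<in> ?T" "a2 \<in> ?T"
        then have "a1 < length p" "a2 < length p" "p!a1 = p!a2" using ab by auto
        then show "a1 = a2" using nth_eq_iff_index_eq[OF dist] by blast
      qed
    qed
    finally show ?thesis by simp
  qed
  have Da: "D (fst (p!a)) (snd (p!a)) = (-1)^a"
  proof -
    have "D (fst (p!a)) (snd (p!a)) = (\<Sum>i\<in>{a..<b}. if i = a then (-1::real)^i else 0)"
      unfolding D_def
      proof (rule sum.cong)
        fix i assume i: "i \<in> {a..<b}"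
        then have "(p!i = p!a) = (i = a)" using nth_eq_iff_index_eq[OF dist, of i a] ab by auto
        then show "(if p!i = (fst (p!a), snd (p!a)) then (-1::real)^i else 0) = (if i = a then (-1)^i else 0)"
          by simp
      qed simp
    also have "\<dots> = (-1)^a" using ab by simp
    finally show ?thesis .
  qed
  have pF: "fst (p!i) \<in> F" "snd (p!i) \<in> U" if "i < length p" for i
    using sub supp that nth_mem by blast+
  have nodesum: "(\<Sum>f\<in>F. D f v) = 0" for v
  proof -
    have "(\<Sum>f\<in>F. D f v) = (\<Sum>i\<in>{a..<b}. \<Sum>f\<in>F. if p!i = (f,v) then (-1::real)^i else 0)"
      unfolding D_def by (rule sum.swap)
    also have "\<dots> = (\<Sum>i\<in>{a..<b}. (-1)^i * (if snd (p!i) = v then 1 else 0))"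
    proof (rule sum.cong)
      fix i assume i: "i \<in> {a..<b}"
      have "(\<Sum>f\<in>F. if p!i = (f,v) then (-1::real)^i else 0)
          = (\<Sum>f\<in>F. if fst (p!i) = f then (if snd (p!i) = v then (-1::real)^i else 0) else 0)"
        by (rule sum.cong) (auto simp: prod_eq_iff)
      also have "\<dots> = (if snd (p!i) = v then (-1::real)^i else 0)"
        using pF(1)[of i] i ab finF by simp
      finally show "(\<Sum>f\<in>F. if p!i = (f,v) then (-1::real)^i else 0) = (-1)^i * (if snd (p!i) = v then 1 else 0)"
        by simp
    qed simp
    also have "\<dots> = 0" using nd by simp
    finally show ?thesis .
  qed
  have flowsum: "(\<Sum>v\<in>U. D f v) = 0" for f
  proof -
    have "(\<Sum>v\<in>U. D f v) = (\<Sum>i\<in>{a..<b}. \<Sum>v\<in>U. if p!i = (f,v) then (-1::real)^i else 0)"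
      unfolding D_def by (rule sum.swap)
    also have "\<dots> = (\<Sum>i\<in>{a..<b}. (-1)^i * (if fst (p!i) = f then 1 else 0))"
    proof (rule sum.cong)
      fix i assume i: "i \<in> {a..<b}"
      have "(\<Sum>v\<in>U. if p!i = (f,v) then (-1::real)^i else 0)
          = (\<Sum>v\<in>U. if snd (p!i) = v then (if fst (p!i) = f then (-1::real)^i else 0) else 0)"
        by (rule sum.cong) (auto simp: prod_eq_iff)
      also have "\<dots> = (if fst (p!i) = f then (-1::real)^i else 0)"
        using pF(2)[of i] i ab finU by simp
      finally show "(\<Sum>v\<in>U. if p!i = (f,v) then (-1::real)^i else 0) = (-1)^i * (if fst (p!i) = f then 1 else 0)"
        by simp
    qed simp
    also have "\<dots> = 0" using fl by simp
    finally show ?thesis .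
  qed
  define eps where "eps = Min ((\<lambda>e. x (fst e) (snd e)) ` set p)"
  have pne: "set p \<noteq> {}" using ab by auto
  have epspos: "0 < eps" unfolding eps_def using pne sub by (simp add: Min_gr_iff)
  have epsle: "eps \<le> x f v" if "(f,v) \<in> set p" for f v
    unfolding eps_def using that by (intro Min_le) (auto intro!: image_eqI[where x="(f,v)"])
  have feasQ: "feasible_Q2 F U Vf lam c (\<lambda>f v. x f v + s * eps * D f v)" if s: "s = 1 \<or> s = -1" for s
    unfolding feasible_Q2_def
  proof (intro conjI allI impI ballI)
    fix f v
    show "0 \<le> x f v + s * eps * D f v"
    proof (cases "(f,v) \<in> set p")
      case True
      have "\<bar>s * eps * D f v\<bar> \<le> eps"
        using Dabs[of f v] epspos s by (auto simp: abs_mult)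
      then show ?thesis using epsle[OF True] by linarith
    next
      case False
      then show ?thesis using Dzero feas unfolding feasible_Q2_def by simp
    qed
  next
    fix f v assume "f \<notin> F \<or> v \<notin> U \<or> v \<notin> Vf f"
    then have "x f v = 0" using feas unfolding feasible_Q2_def by blast
    moreover then have "(f,v) \<notin> set p" using sub by force
    ultimately show "x f v + s * eps * D f v = 0" using Dzero by simp
  next
    fix v assume "v \<in> U"
    have "(\<Sum>f\<in>F. x f v + s * eps * D f v) = (\<Sum>f\<in>F. x f v) + s * eps * (\<Sum>f\<in>F. D f v)"
      by (simp add: sum.distrib sum_distrib_left)
    then show "(\<Sum>f\<in>F. x f v + s * eps * D f v) \<le> c v"
      using nodesum feas \<open>v \<in> U\<close> unfolding feasible_Q2_def by simp
  next
    fix f assume "f \<in> F"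
    have "(\<Sum>v\<in>U. x f v + s * eps * D f v) = (\<Sum>v\<in>U. x f v) + s * eps * (\<Sum>v\<in>U. D f v)"
      by (simp add: sum.distrib sum_distrib_left)
    then show "(\<Sum>v\<in>U. x f v + s * eps * D f v) \<le> lam f"
      using flowsum feas \<open>f \<in> F\<close> unfolding feasible_Q2_def by simp
  qed
  have xeq: "x = (\<lambda>f v. (1/2) * (x f v + 1 * eps * D f v) + (1 - 1/2) * (x f v + (-1) * eps * D f v))"
    by (simp add: algebra_simps)
  have E: "\<And>y z (t::real). feasible_Q2 F U Vf lam c y \<Longrightarrow> feasible_Q2 F U Vf lam c z \<Longrightarrow> 0 < t \<Longrightarrow> t < 1
      \<Longrightarrow> x = (\<lambda>f v. t * y f v + (1 - t) * z f v) \<Longrightarrow> y = z"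
    using ext unfolding extreme_Q2_def by blast
  have f1: "feasible_Q2 F U Vf lam c (\<lambda>f v. x f v + 1 * eps * D f v)" by (rule feasQ) (rule disjI1, rule refl)
  have f2: "feasible_Q2 F U Vf lam c (\<lambda>f v. x f v + (-1) * eps * D f v)" by (rule feasQ) (rule disjI2, rule refl)
  have h1: "0 < (1/2::real)" and h2: "(1/2::real) < 1" by simp_all
  have eq: "(\<lambda>f v. x f v + 1 * eps * D f v) = (\<lambda>f v. x f v + (-1) * eps * D f v)"
    by (rule E[OF f1 f2 h1 h2 xeq])
  have "x (fst (p!a)) (snd (p!a)) + 1 * eps * D (fst (p!a)) (snd (p!a)) = x (fst (p!a)) (snd (p!a)) + (-1) * eps * D (fst (p!a)) (snd (p!a))"
    using fun_cong[OF fun_cong[OF eq, of "fst (p!a)"], of "snd (p!a)"] by simp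
  then have "eps * D (fst (p!a)) (snd (p!a)) = - eps * D (fst (p!a)) (snd (p!a))"
    by simp
  then show False using Da epspos by simp
qed


definition Phi :: "('f \<Rightarrow> 'v \<Rightarrow> real) \<Rightarrow> real" where
  "Phi y = (\<Sum>f\<in>F. \<Sum>v\<in>U. lam f * y f v)"
definition Dn :: "('f \<Rightarrow> 'v \<Rightarrow> real) \<Rightarrow> 'v set" where
  "Dn y = {v\<in>U. \<forall>g. (g,v) \<notin> mca_edges F U y}"
definition Inv :: "real \<Rightarrow> ('f \<Rightarrow> 'v \<Rightarrow> real) \<Rightarrow> bool" where
  "Inv opt y \<longleftrightarrow> (\<forall>f\<in>F. \<forall>v\<in>U. 0 \<le> y f v \<and> y f v \<le> 1) \<and> (\<forall>f\<in>F. (\<Sum>v\<in>U. y f v) \<le> 1)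
     \<and> (\<forall>f v. (f,v) \<in> mca_edges F U y \<longrightarrow> 0 < x f v)
     \<and> opt \<le> Phi y + (\<Sum>v\<in>Dn y. mca_load F lam y v)"

lemma path_alt:
  assumes "mca_path F U y v1 p"
  shows "\<forall>i. Suc i < length p \<longrightarrow> (if even i then fst (p!i) = fst (p!Suc i) else snd (p!i) = snd (p!Suc i))"
  using assms unfolding mca_path_def by blast

lemma fsum_path:
  assumes "mca_path F U y v1 p" "a < b" "b \<le> length p"
  shows "(\<Sum>i\<in>{a..<b}. (-1)^i * (if fst (p!i) = g then 1 else 0)) =
    (if odd a then (-1)^a * (if fst (p!a) = g then 1 else 0) else 0)
    + (if even (b - 1) then (-1)^(b-1) * (if fst (p!(b-1)) = g then 1 else 0) else (0::real))"
proof -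
  have "\<forall>i. a \<le> i \<and> Suc i < b \<and> even (i + 0) \<longrightarrow> (if fst (p!i) = g then 1 else 0) = (if fst (p!Suc i) = g then 1 else (0::real))"
    using path_alt[OF assms(1)] assms(3) by auto
  from alt_sum[OF assms(2) this] show ?thesis by simp
qed

lemma nsum_path:
  assumes "mca_path F U y v1 p" "a < b" "b \<le> length p"
  shows "(\<Sum>i\<in>{a..<b}. (-1)^i * (if snd (p!i) = v then 1 else 0)) =
    (if even a then (-1)^a * (if snd (p!a) = v then 1 else 0) else 0)
    + (if odd (b - 1) then (-1)^(b-1) * (if snd (p!(b-1)) = v then 1 else 0) else (0::real))"
proof -
  have "\<forall>i. a \<le> i \<and> Suc i < b \<and> even (i + 1) \<longrightarrow> (if snd (p!i) = v then 1 else 0) = (if snd (p!Suc i) = v then 1 else (0::real))"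
    using path_alt[OF assms(1)] assms(3) by auto
  from alt_sum[OF assms(2) this] show ?thesis by simp
qed

lemma path_supp:
  assumes "Inv opt y" "mca_path F U y v1 p"
  shows "\<forall>e\<in>set p. 0 < x (fst e) (snd e)"
  using assms unfolding Inv_def mca_path_def by auto

lemma extend_false:
  assumes lp: "mca_longest_path F U y v1 e p" and e': "e' \<in> mca_edges F U y" "e' \<notin> set p"
    and c: "if even (length p - 1) then fst (p!(length p - 1)) = fst e' else snd (p!(length p - 1)) = snd e'"
  shows False
proof -
  have P: "mca_path F U y v1 p" and h: "hd p = e" and mx: "\<forall>q. mca_path F U y v1 q \<and> hd q = e \<longrightarrow> length q \<le> length p"
    using lp unfolding mca_longest_path_def by auto
  have ne: "p \<noteq> []" using P unfolding mca_path_def by auto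
  have "mca_path F U y v1 (p @ [e'])"
    unfolding mca_path_def
  proof (intro conjI allI impI)
    show "p @ [e'] \<noteq> []" by simp
    show "snd (hd (p @ [e'])) = v1" using P ne unfolding mca_path_def by simp
    show "distinct (p @ [e'])" using P e' unfolding mca_path_def by simp
    show "set (p @ [e']) \<subseteq> mca_edges F U y" using P e' unfolding mca_path_def by simp
    fix i assume i: "Suc i < length (p @ [e'])"
    show "if even i then fst ((p @ [e']) ! i) = fst ((p @ [e']) ! Suc i) else snd ((p @ [e']) ! i) = snd ((p @ [e']) ! Suc i)"
    proof (cases "Suc i < length p")
      case True
      then show ?thesis using path_alt[OF P] by (simp add: nth_append)
    next
      case False
      then have ieq: "i = length p - 1" and si: "Suc i = length p" using i by auto
      have A: "(p @ [e']) ! i = p ! (length p - 1)" using ieq ne by (simp add: nth_append)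
      have B: "(p @ [e']) ! Suc i = e'" using si by (metis nth_append_length)
      show ?thesis unfolding A B using c by (simp only: ieq)
    qed
  qed
  moreover have "hd (p @ [e']) = e" using h ne by simp
  ultimately have "length (p @ [e']) \<le> length p" using mx by blast
  then show False by simp
qed

lemma longest_odd:
  assumes I: "Inv opt y" and nl: "\<forall>f v. \<not> mca_leaf F U y f v" and lp: "mca_longest_path F U y v1 e p"
  shows "odd (length p)"
proof (rule ccontr)
  assume ev: "\<not> odd (length p)"
  have P: "mca_path F U y v1 p" using lp unfolding mca_longest_path_def by auto
  have ne: "p \<noteq> []" using P unfolding mca_path_def by auto
  define n where "n = length p"
  have n0: "0 < n" using ne n_def by simp
  then have n2: "2 \<le> n" using ev n_def by presburger
  define g where "g = fst (p!(n-1))"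
  define u where "u = snd (p!(n-1))"
  have gu: "(g,u) \<in> mca_edges F U y"
    using P n0 unfolding mca_path_def g_def u_def n_def by (metis diff_less nth_mem prod.collapse subsetD zero_less_one)
  then have uU: "u \<in> U" unfolding mca_edges_def by auto
  have "\<not> mca_leaf F U y g u" using nl by blast
  then have "{h. (h,u) \<in> mca_edges F U y} \<noteq> {g}" unfolding mca_leaf_def by blast
  then obtain h where h: "(h,u) \<in> mca_edges F U y" "h \<noteq> g" using gu by blast
  show False
  proof (cases "(h,u) \<in> set p")
    case False
    show False
      by (rule extend_false[OF lp h(1) False]) (use ev n_def u_def ne in simp)
  next
    case True
    then obtain j where j: "j < n" "p!j = (h,u)" unfolding n_def by (metis in_set_conv_nth)
    have jn: "j \<noteq> n - 1" using j h(2) g_def by auto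
    define s where "s = (if even j then j else Suc j)"
    have alt: "\<forall>i. Suc i < n \<longrightarrow> (if even i then fst (p!i) = fst (p!Suc i) else snd (p!i) = snd (p!Suc i))"
      using path_alt[OF P] n_def by simp
    have s: "even s" "s < n" "snd (p!s) = u"
    proof -
      show "even s" unfolding s_def by auto
      show "s < n" using j jn ev n_def unfolding s_def by auto
      show "snd (p!s) = u"
      proof (cases "even j")
        case True then show ?thesis using j s_def by simp
      next
        case False
        then have "Suc j < n" using j jn ev n_def by (metis Suc_lessI diff_Suc_1 even_Suc)
        then show ?thesis using alt False j s_def by (metis snd_conv)
      qed
    qed
    have nlen: "n \<le> length p" using n_def by simp
    show False
    proof (rule no_cycle[of p s n])
      show "distinct p" using P unfolding mca_path_def by blast
      show "\<forall>e\<in>set p. 0 < x (fst e) (snd e)" by (rule path_supp[OF I P])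
      show "s < n" "n \<le> length p" using s nlen by auto
      show "\<forall>g. (\<Sum>i = s..<n. (- 1) ^ i * (if fst (p ! i) = g then 1 else 0)) = (0::real)"
        using fsum_path[OF P \<open>s < n\<close> nlen] s ev n_def ne by simp
      show "\<forall>v. (\<Sum>i = s..<n. (- 1) ^ i * (if snd (p ! i) = v then 1 else 0)) = (0::real)"
      proof
        fix v
        have "odd (n - 1)" using ev n0 n_def by simp
        then show "(\<Sum>i = s..<n. (- 1) ^ i * (if snd (p ! i) = v then 1 else 0)) = (0::real)"
          using nsum_path[OF P \<open>s < n\<close> nlen, of v] s u_def by simp
      qed
    qed
  qed
qed


lemma longest_last:
  assumes I: "Inv opt y" and nl: "\<forall>f v. \<not> mca_leaf F U y f v" and lp: "mca_longest_path F U y v1 e p"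
    and w: "w \<in> U" "w \<noteq> snd (p!(length p - 1))"
  shows "y (fst (p!(length p - 1))) w = 0"
proof (rule ccontr)
  assume nz: "y (fst (p!(length p - 1))) w \<noteq> 0"
  have od: "odd (length p)" by (rule longest_odd[OF I nl lp])
  have P: "mca_path F U y v1 p" using lp unfolding mca_longest_path_def by auto
  have ne: "p \<noteq> []" using P unfolding mca_path_def by auto
  define n where "n = length p"
  have n0: "0 < n" using ne n_def by simp
  define g where "g = fst (p!(n-1))"
  define u where "u = snd (p!(n-1))"
  have gu: "(g,u) \<in> mca_edges F U y"
    using P n0 unfolding mca_path_def g_def u_def n_def by (metis diff_less nth_mem prod.collapse subsetD zero_less_one)
  then have gF: "g \<in> F" and uU: "u \<in> U" and yu: "0 < y g u" unfolding mca_edges_def by auto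
  have wu: "w \<noteq> u" using w u_def n_def by simp
  have nz': "y g w \<noteq> 0" using nz g_def n_def by simp
  have rng: "0 \<le> y g v" "y g v \<le> 1" if "v \<in> U" for v using I gF that unfolding Inv_def by auto
  have sum1: "(\<Sum>v\<in>U. y g v) \<le> 1" using I gF unfolding Inv_def by auto
  show False
  proof (cases "y g w = 1")
    case True
    have "(\<Sum>v\<in>{w,u}. y g v) \<le> (\<Sum>v\<in>U. y g v)"
      by (rule sum_mono2) (use finU w uU rng in auto)
    then show False using True yu wu sum1 by simp
  next
    case False
    then have gw: "(g,w) \<in> mca_edges F U y" using rng[OF w(1)] nz' gF w unfolding mca_edges_def by auto
    show False
    proof (cases "(g,w) \<in> set p")
      case False
      show False
        by (rule extend_false[OF lp gw False]) (use od n_def g_def ne in simp)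
    next
      case True
      then obtain j where j: "j < n" "p!j = (g,w)" unfolding n_def by (metis in_set_conv_nth)
      have jn: "j \<noteq> n - 1" using j wu u_def by auto
      define s where "s = (if odd j then j else Suc j)"
      have alt: "\<forall>i. Suc i < n \<longrightarrow> (if even i then fst (p!i) = fst (p!Suc i) else snd (p!i) = snd (p!Suc i))"
        using path_alt[OF P] n_def by simp
      have s: "odd s" "s < n" "fst (p!s) = g"
      proof -
        show "odd s" unfolding s_def by auto
        show "s < n" unfolding s_def using j jn by (cases "odd j") auto
        show "fst (p!s) = g"
        proof (cases "odd j")
          case True then show ?thesis using j s_def by simp
        next
          case False
          then have "Suc j < n" using j jn od n_def by (metis Suc_lessI diff_Suc_1)
          then show ?thesis using alt False j s_def by (metis fst_conv)
        qed
      qed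
      have nlen: "n \<le> length p" using n_def by simp
      show False
      proof (rule no_cycle[of p s n])
        show "distinct p" using P unfolding mca_path_def by blast
        show "\<forall>e\<in>set p. 0 < x (fst e) (snd e)" by (rule path_supp[OF I P])
        show "s < n" "n \<le> length p" using s nlen by auto
        show "\<forall>v. (\<Sum>i = s..<n. (- 1) ^ i * (if snd (p ! i) = v then 1 else 0)) = (0::real)"
          using nsum_path[OF P \<open>s < n\<close> nlen] s od n_def ne by simp
        show "\<forall>g'. (\<Sum>i = s..<n. (- 1) ^ i * (if fst (p ! i) = g' then 1 else 0)) = (0::real)"
        proof
          fix g'
          have "even (n - 1)" using od n0 n_def by simp
          then show "(\<Sum>i = s..<n. (- 1) ^ i * (if fst (p ! i) = g' then 1 else 0)) = (0::real)"
            using fsum_path[OF P \<open>s < n\<close> nlen, of g'] s g_def by simp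
        qed
      qed
    qed
  qed
qed


lemma sumU_swap:
  assumes "\<forall>i<n. snd (p!i) \<in> U"
  shows "(\<Sum>v\<in>U. \<Sum>i<n. if p!i = (g,v) then cc i else 0) = (\<Sum>i<n. if fst (p!i) = g then cc i else (0::real))"
proof -
  have "(\<Sum>v\<in>U. \<Sum>i<n. if p!i = (g,v) then cc i else 0) = (\<Sum>i<n. \<Sum>v\<in>U. if p!i = (g,v) then cc i else 0)"
    by (rule sum.swap)
  also have "\<dots> = (\<Sum>i<n. if fst (p!i) = g then cc i else (0::real))"
  proof (rule sum.cong)
    fix i assume i: "i \<in> {..<n}"
    have "(\<Sum>v\<in>U. if p!i = (g,v) then cc i else 0) = (\<Sum>v\<in>U. if snd (p!i) = v then (if fst (p!i) = g then cc i else 0) else 0)"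
      by (rule sum.cong) (auto simp: prod_eq_iff)
    also have "\<dots> = (if fst (p!i) = g then cc i else 0)" using assms i finU by simp
    finally show "(\<Sum>v\<in>U. if p!i = (g,v) then cc i else 0) = (if fst (p!i) = g then cc i else 0)" .
  qed simp
  finally show ?thesis .
qed

lemma sumF_swap:
  assumes "\<forall>i<n. fst (p!i) \<in> F"
  shows "(\<Sum>f\<in>F. \<Sum>i<n. if p!i = (f,v) then cc i else 0) = (\<Sum>i<n. if snd (p!i) = v then cc i else (0::real))"
proof -
  have "(\<Sum>f\<in>F. \<Sum>i<n. if p!i = (f,v) then cc i else 0) = (\<Sum>i<n. \<Sum>f\<in>F. if p!i = (f,v) then cc i else 0)"
    by (rule sum.swap)
  also have "\<dots> = (\<Sum>i<n. if snd (p!i) = v then cc i else (0::real))"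
  proof (rule sum.cong)
    fix i assume i: "i \<in> {..<n}"
    have "(\<Sum>f\<in>F. if p!i = (f,v) then cc i else 0) = (\<Sum>f\<in>F. if fst (p!i) = f then (if snd (p!i) = v then cc i else 0) else 0)"
      by (rule sum.cong) (auto simp: prod_eq_iff)
    also have "\<dots> = (if snd (p!i) = v then cc i else 0)" using assms i finF by simp
    finally show "(\<Sum>f\<in>F. if p!i = (f,v) then cc i else 0) = (if snd (p!i) = v then cc i else 0)" .
  qed simp
  finally show ?thesis .
qed

lemma sumU_simple:
  assumes "\<forall>i<n. q i \<in> U"
  shows "(\<Sum>v\<in>U. \<Sum>i<n. if q i = v then cc i else 0) = (\<Sum>i<n. cc i :: real)"
proof -
  have "(\<Sum>v\<in>U. \<Sum>i<n. if q i = v then cc i else 0) = (\<Sum>i<n. \<Sum>v\<in>U. if q i = v then cc i else 0)"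
    by (rule sum.swap)
  also have "\<dots> = (\<Sum>i<n. cc i)" using assms finU by (intro sum.cong) auto
  finally show ?thesis .
qed

lemma path_FU:
  assumes "mca_path F U y v1 p"
  shows "\<forall>i<length p. fst (p!i) \<in> F \<and> snd (p!i) \<in> U \<and> p!i \<in> mca_edges F U y"
  using assms unfolding mca_path_def mca_edges_def by (auto dest!: nth_mem)

lemma alt_one:
  assumes "odd n"
  shows "(\<Sum>i<n. (-1::real)^i) = 1"
proof -
  have "0 < n" using assms by (cases n) auto
  have "(\<Sum>i\<in>{0..<n}. (-1::real)^i * 1) = (if odd (0+0) then (-1)^0 * 1 else 0) + (if even (n - 1 + 0) then (-1)^(n-1) * 1 else 0)"
    using alt_sum[where a=0 and b=n and k=0 and h="\<lambda>_. 1"] \<open>0 < n\<close> by simp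
  then show ?thesis using assms \<open>0 < n\<close> by (simp add: atLeast0LessThan)
qed

lemma load_nonneg: "0 \<le> mca_load F lam y v"
  unfolding mca_load_def using lampos by (auto intro!: sum_nonneg simp: less_imp_le)

lemma finDn: "finite (Dn y)" using finU unfolding Dn_def by auto

lemma step2_Inv:
  assumes I: "Inv opt y" and st: "mca_step2 F U lam y y'"
  shows "Inv opt y'"
proof -
  obtain v1 f1 f2 p1 p2 d where nl: "\<forall>f v. \<not> mca_leaf F U y f v"
    and lp1: "mca_longest_path F U y v1 (f1, v1) p1" and lp2: "mca_longest_path F U y v1 (f2, v1) p2"
    and d: "0 < d" and y': "y' = mca_perturb lam y d p1 p2"
    and bnd: "\<forall>(f, v) \<in> set p1 \<union> set p2. 0 \<le> y' f v \<and> y' f v \<le> 1"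
    using st unfolding mca_step2_def by blast
  have P1: "mca_path F U y v1 p1" using lp1 unfolding mca_longest_path_def by auto
  have P2: "mca_path F U y v1 p2" using lp2 unfolding mca_longest_path_def by auto
  define n1 where "n1 = length p1"
  define n2 where "n2 = length p2"
  have o1: "odd n1" using longest_odd[OF I nl lp1] n1_def by simp
  have o2: "odd n2" using longest_odd[OF I nl lp2] n2_def by simp
  define S1 where "S1 f v = (\<Sum>i<n1. if p1 ! i = (f, v) then (-1)^i * d else 0)" for f v
  define S2 where "S2 f v = (\<Sum>i<n2. if p2 ! i = (f, v) then - ((-1)^i * d) else 0)" for f v
  have y'eq: "y' f v = y f v + (S1 f v + S2 f v) / lam f" for f v
    unfolding y' mca_perturb_def S1_def S2_def n1_def n2_def by simp
  have off: "y' f v = y f v" if "(f,v) \<notin> set p1" "(f,v) \<notin> set p2" for f v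
  proof -
    have "S1 f v = 0" unfolding S1_def using that(1) n1_def by (auto intro!: sum.neutral) (metis nth_mem)
    moreover have "S2 f v = 0" unfolding S2_def using that(2) n2_def by (auto intro!: sum.neutral) (metis nth_mem)
    ultimately show ?thesis using y'eq by simp
  qed
  have sub1: "set p1 \<subseteq> mca_edges F U y" and sub2: "set p2 \<subseteq> mca_edges F U y"
    using P1 P2 unfolding mca_path_def by auto
  have edges_sub: "mca_edges F U y' \<subseteq> mca_edges F U y"
  proof
    fix e assume e: "e \<in> mca_edges F U y'"
    obtain f v where fv: "e = (f,v)" by (cases e)
    show "e \<in> mca_edges F U y"
    proof (cases "(f,v) \<in> set p1 \<or> (f,v) \<in> set p2")
      case True then show ?thesis using sub1 sub2 fv by auto
    next
      case False then show ?thesis using off[of f v] e fv unfolding mca_edges_def by auto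
    qed
  qed
  have rng: "\<forall>f\<in>F. \<forall>v\<in>U. 0 \<le> y' f v \<and> y' f v \<le> 1"
  proof (intro ballI)
    fix f v assume "f \<in> F" "v \<in> U"
    show "0 \<le> y' f v \<and> y' f v \<le> 1"
    proof (cases "(f,v) \<in> set p1 \<or> (f,v) \<in> set p2")
      case True then show ?thesis using bnd by auto
    next
      case False then show ?thesis using off[of f v] I \<open>f \<in> F\<close> \<open>v \<in> U\<close> unfolding Inv_def by auto
    qed
  qed
  have FU1: "\<forall>i<n1. fst (p1!i) \<in> F \<and> snd (p1!i) \<in> U \<and> p1!i \<in> mca_edges F U y" using path_FU[OF P1] n1_def by simp
  have FU2: "\<forall>i<n2. fst (p2!i) \<in> F \<and> snd (p2!i) \<in> U \<and> p2!i \<in> mca_edges F U y" using path_FU[OF P2] n2_def by simp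
  have n1p: "0 < n1" and n2p: "0 < n2" using o1 o2 by (auto intro: odd_pos)
  define g1 where "g1 = fst (p1!(n1-1))"
  define u1 where "u1 = snd (p1!(n1-1))"
  have g1u1: "(g1,u1) \<in> set p1" unfolding g1_def u1_def n1_def using n1p n1_def by simp
  have g1F: "g1 \<in> F" and u1U: "u1 \<in> U" using FU1 n1p unfolding g1_def u1_def by auto
  have sumS1: "(\<Sum>v\<in>U. S1 g v) = (if g = g1 then d else 0)" for g
  proof -
    have "(\<Sum>v\<in>U. S1 g v) = (\<Sum>i<n1. if fst (p1!i) = g then (-1)^i * d else 0)"
      unfolding S1_def by (rule sumU_swap) (use FU1 in auto)
    also have "\<dots> = d * (\<Sum>i\<in>{0..<n1}. (-1)^i * (if fst (p1!i) = g then 1 else 0))"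
      by (simp add: sum_distrib_left atLeast0LessThan if_distrib cong: if_cong) (rule sum.cong, auto)
    also have "\<dots> = (if g = g1 then d else 0)"
      using fsum_path[OF P1 n1p, of g] o1 n1_def g1_def by simp
    finally show ?thesis .
  qed
  have sumS2: "(\<Sum>v\<in>U. S2 g v) \<le> 0" for g
  proof -
    have "(\<Sum>v\<in>U. S2 g v) = (\<Sum>i<n2. if fst (p2!i) = g then - ((-1)^i * d) else 0)"
      unfolding S2_def by (rule sumU_swap) (use FU2 in auto)
    also have "\<dots> = - d * (\<Sum>i\<in>{0..<n2}. (-1)^i * (if fst (p2!i) = g then 1 else 0))"
      by (simp add: sum_distrib_left atLeast0LessThan if_distrib cong: if_cong) (rule sum.cong, auto)
    also have "\<dots> = - d * (if fst (p2!(n2-1)) = g then 1 else 0)"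
      using fsum_path[OF P2 n2p, of g] o2 n2_def by simp
    also have "\<dots> \<le> 0" using d by simp
    finally show ?thesis .
  qed
  have fsum: "\<forall>f\<in>F. (\<Sum>v\<in>U. y' f v) \<le> 1"
  proof
    fix g assume gF: "g \<in> F"
    show "(\<Sum>v\<in>U. y' g v) \<le> 1"
    proof (cases "g = g1")
      case True
      have z: "y' g w = 0" if "w \<in> U" "w \<noteq> u1" for w
      proof -
        have "y g w = 0" using longest_last[OF I nl lp1 that(1)] that(2) True g1_def u1_def n1_def by simp
        then have "(g,w) \<notin> mca_edges F U y" unfolding mca_edges_def by auto
        then have "(g,w) \<notin> set p1" "(g,w) \<notin> set p2" using sub1 sub2 by auto
        then show ?thesis using off \<open>y g w = 0\<close> by simp
      qed
      have "(\<Sum>v\<in>U. y' g v) = (\<Sum>v\<in>U. if v = u1 then y' g u1 else 0)"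
        by (rule sum.cong) (auto simp: z)
      also have "\<dots> = y' g u1" using u1U finU by simp
      also have "\<dots> \<le> 1" using bnd g1u1 True by auto
      finally show ?thesis .
    next
      case False
      have e1: "(\<Sum>v\<in>U. y' g v) = (\<Sum>v\<in>U. y g v) + (\<Sum>v\<in>U. (S1 g v + S2 g v) / lam g)"
        by (simp add: y'eq sum.distrib)
      have e2: "(\<Sum>v\<in>U. (S1 g v + S2 g v) / lam g) = ((\<Sum>v\<in>U. S1 g v) + (\<Sum>v\<in>U. S2 g v)) / lam g"
        by (simp add: sum_divide_distrib[symmetric] sum.distrib)
      have e3: "((\<Sum>v\<in>U. S1 g v) + (\<Sum>v\<in>U. S2 g v)) / lam g \<le> 0"
        using sumS1[of g] sumS2[of g] False lampos gF by (simp add: divide_nonpos_pos)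
      have e4: "(\<Sum>v\<in>U. y g v) \<le> 1" using I gF unfolding Inv_def by auto
      show ?thesis using e1 e2 e3 e4 by linarith
    qed
  qed
  have phi: "Phi y' = Phi y"
  proof -
    have "Phi y' = Phi y + (\<Sum>f\<in>F. \<Sum>v\<in>U. S1 f v + S2 f v)"
    proof -
      have "Phi y' = (\<Sum>f\<in>F. \<Sum>v\<in>U. lam f * y f v + (S1 f v + S2 f v))"
        unfolding Phi_def using lampos by (intro sum.cong refl) (simp add: y'eq algebra_simps add_divide_distrib less_imp_neq[symmetric])
      then show ?thesis unfolding Phi_def by (simp add: sum.distrib)
    qed
    also have "(\<Sum>f\<in>F. \<Sum>v\<in>U. S1 f v + S2 f v) = (\<Sum>v\<in>U. \<Sum>f\<in>F. S1 f v) + (\<Sum>v\<in>U. \<Sum>f\<in>F. S2 f v)"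
      by (simp add: sum.distrib sum.swap[of _ F U])
    also have "(\<Sum>v\<in>U. \<Sum>f\<in>F. S1 f v) = (\<Sum>v\<in>U. \<Sum>i<n1. if snd (p1!i) = v then (-1)^i * d else 0)"
      unfolding S1_def by (rule sum.cong[OF refl], rule sumF_swap) (use FU1 in auto)
    also have "\<dots> = (\<Sum>i<n1. (-1)^i * d)"
      by (rule sumU_simple) (use FU1 in auto)
    also have "(\<Sum>v\<in>U. \<Sum>f\<in>F. S2 f v) = (\<Sum>v\<in>U. \<Sum>i<n2. if snd (p2!i) = v then - ((-1)^i * d) else 0)"
      unfolding S2_def by (rule sum.cong[OF refl], rule sumF_swap) (use FU2 in auto)
    also have "\<dots> = (\<Sum>i<n2. - ((-1)^i * d))"
      by (rule sumU_simple) (use FU2 in auto)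
    finally show ?thesis using alt_one[OF o1] alt_one[OF o2]
      by (simp add: sum_distrib_right[symmetric] sum_negf)
  qed
  have Dsub: "Dn y \<subseteq> Dn y'" unfolding Dn_def using edges_sub by auto
  have loadeq: "mca_load F lam y' v = mca_load F lam y v" if "v \<in> Dn y" for v
  proof -
    have "y' g v = y g v" for g
    proof -
      have "(g,v) \<notin> mca_edges F U y" using that unfolding Dn_def by auto
      then show ?thesis using off sub1 sub2 by blast
    qed
    then show ?thesis unfolding mca_load_def by simp
  qed
  have "(\<Sum>v\<in>Dn y. mca_load F lam y v) = (\<Sum>v\<in>Dn y. mca_load F lam y' v)"
    using loadeq by simp
  also have "\<dots> \<le> (\<Sum>v\<in>Dn y'. mca_load F lam y' v)"
    by (rule sum_mono2[OF finDn Dsub]) (simp add: load_nonneg)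
  finally have "opt \<le> Phi y' + (\<Sum>v\<in>Dn y'. mca_load F lam y' v)" using I phi unfolding Inv_def by simp
  moreover have "\<forall>f v. (f,v) \<in> mca_edges F U y' \<longrightarrow> 0 < x f v" using I edges_sub unfolding Inv_def by blast
  ultimately show ?thesis using rng fsum unfolding Inv_def by blast
qed


lemma load_sum: "mca_load F lam y v = (\<Sum>g\<in>F. if y g v = 1 then lam g else 0)"
  unfolding mca_load_def using finF by (simp add: sum.inter_filter)

lemma step1_Inv:
  assumes I: "Inv opt y" and st: "mca_step1 F U lam y y'"
  shows "Inv opt y'"
proof -
  obtain f v where vU: "v \<in> U" and lf: "mca_leaf F U y f v"
    and br: "if lam f * y f v \<le> mca_load F lam y v
         then y' = y(f := (y f)(v := 0))
         else y' = (\<lambda>g w. if g = f then (if w = v then 1 else 0)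
                          else if w = v \<and> y g v = 1 then 0 else y g w)"
    using st unfolding mca_step1_def by blast
  have fv: "(f,v) \<in> mca_edges F U y" and only: "\<And>g. (g,v) \<in> mca_edges F U y \<Longrightarrow> g = f"
    using lf unfolding mca_leaf_def by auto
  then have fF: "f \<in> F" and yfv: "0 < y f v" "y f v < 1" unfolding mca_edges_def by auto
  have lamf: "0 < lam f" using lampos fF by auto
  have rngy: "0 \<le> y g w" "y g w \<le> 1" if "g \<in> F" "w \<in> U" for g w using I that unfolding Inv_def by auto
  have sumy: "(\<Sum>w\<in>U. y g w) \<le> 1" if "g \<in> F" for g using I that unfolding Inv_def by auto
  have suppy: "\<forall>g w. (g,w) \<in> mca_edges F U y \<longrightarrow> 0 < x g w" using I unfolding Inv_def by auto
  have vnD: "v \<notin> Dn y" using fv unfolding Dn_def by auto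
  have IP: "opt \<le> Phi y + (\<Sum>w\<in>Dn y. mca_load F lam y w)" using I unfolding Inv_def by auto
  have Dins: "(\<Sum>w\<in>insert v (Dn y). mca_load F lam y' w) = mca_load F lam y' v + (\<Sum>w\<in>Dn y. mca_load F lam y' w)"
    using finDn vnD by simp
  show ?thesis
  proof (cases "lam f * y f v \<le> mca_load F lam y v")
    case True
    then have y': "y' = y(f := (y f)(v := 0))" using br by simp
    have y'g: "y' g w = (if g = f \<and> w = v then 0 else y g w)" for g w using y' by simp
    have le: "y' g w \<le> y g w" if "g \<in> F" "w \<in> U" for g w using y'g rngy that by auto
    have edges_sub: "mca_edges F U y' \<subseteq> mca_edges F U y" unfolding mca_edges_def using y'g by auto
    have rng: "\<forall>g\<in>F. \<forall>w\<in>U. 0 \<le> y' g w \<and> y' g w \<le> 1" using y'g rngy by auto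
    have fsum: "\<forall>g\<in>F. (\<Sum>w\<in>U. y' g w) \<le> 1"
    proof
      fix g assume "g \<in> F"
      have "(\<Sum>w\<in>U. y' g w) \<le> (\<Sum>w\<in>U. y g w)" by (rule sum_mono) (use le \<open>g \<in> F\<close> in auto)
      then show "(\<Sum>w\<in>U. y' g w) \<le> 1" using sumy[OF \<open>g \<in> F\<close>] by linarith
    qed
    have loadeq: "mca_load F lam y' w = mca_load F lam y w" for w
      unfolding load_sum using y'g yfv by (intro sum.cong) auto
    have phi: "Phi y' = Phi y - lam f * y f v"
    proof -
      have "Phi y' = (\<Sum>g\<in>F. \<Sum>w\<in>U. lam g * y g w - (if g = f then (if w = v then lam f * y f v else 0) else 0))"
        unfolding Phi_def using y'g by (intro sum.cong refl) auto
      also have "\<dots> = Phi y - (\<Sum>g\<in>F. \<Sum>w\<in>U. (if g = f then (if w = v then lam f * y f v else 0) else 0))"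
        unfolding Phi_def by (simp add: sum_subtractf)
      also have "(\<Sum>g\<in>F. \<Sum>w\<in>U. (if g = f then (if w = v then lam f * y f v else 0) else 0)) = lam f * y f v"
      proof -
        have "(\<Sum>w\<in>U. (if g = f then (if w = v then lam f * y f v else 0) else 0)) = (if g = f then lam f * y f v else 0)" for g
          using finU vU by (cases "g = f") auto
        then show ?thesis using finF fF by simp
      qed
      finally show ?thesis .
    qed
    have Dsub: "insert v (Dn y) \<subseteq> Dn y'"
      unfolding Dn_def using edges_sub vU only y'g unfolding mca_edges_def by auto
    have "opt \<le> Phi y' + mca_load F lam y v + (\<Sum>w\<in>Dn y. mca_load F lam y w)" using IP phi True by linarith
    also have "\<dots> = Phi y' + (\<Sum>w\<in>insert v (Dn y). mca_load F lam y' w)" using Dins loadeq by simp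
    also have "\<dots> \<le> Phi y' + (\<Sum>w\<in>Dn y'. mca_load F lam y' w)"
      using sum_mono2[OF finDn Dsub, of "mca_load F lam y'", OF load_nonneg] by simp
    finally have "opt \<le> Phi y' + (\<Sum>w\<in>Dn y'. mca_load F lam y' w)" .
    then show ?thesis using rng fsum edges_sub suppy unfolding Inv_def by blast
  next
    case False
    then have y'g: "y' g w = (if g = f then (if w = v then 1 else 0)
                          else if w = v \<and> y g v = 1 then 0 else y g w)" for g w using br by simp
    have edges_sub: "mca_edges F U y' \<subseteq> mca_edges F U y" unfolding mca_edges_def using y'g by auto
    have rng: "\<forall>g\<in>F. \<forall>w\<in>U. 0 \<le> y' g w \<and> y' g w \<le> 1" using y'g rngy by auto
    have fsum: "\<forall>g\<in>F. (\<Sum>w\<in>U. y' g w) \<le> 1"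
    proof
      fix g assume gF: "g \<in> F"
      show "(\<Sum>w\<in>U. y' g w) \<le> 1"
      proof (cases "g = f")
        case True
        have "(\<Sum>w\<in>U. y' g w) = (\<Sum>w\<in>U. if w = v then 1 else 0)" using True y'g by simp
        then show ?thesis using vU finU by simp
      next
        case False
        have "(\<Sum>w\<in>U. y' g w) \<le> (\<Sum>w\<in>U. y g w)" by (rule sum_mono) (use y'g False rngy gF in auto)
        then show ?thesis using sumy[OF gF] by linarith
      qed
    qed
    have Tg: "(\<Sum>w\<in>U. lam g * y' g w) + (if y g v = 1 then lam g else 0) \<ge> (\<Sum>w\<in>U. lam g * y g w)"
      if gF: "g \<in> F" for g
    proof (cases "g = f")
      case True
      have "(\<Sum>w\<in>U. lam g * y' g w) = (\<Sum>w\<in>U. if w = v then lam f else 0)"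
        using True y'g by (intro sum.cong) auto
      then have "(\<Sum>w\<in>U. lam g * y' g w) = lam f" using vU finU by simp
      moreover have "(\<Sum>w\<in>U. lam g * y g w) \<le> lam f"
        using sumy[OF fF] lamf True by (simp add: sum_distrib_left[symmetric])
      ultimately show ?thesis using True yfv by simp
    next
      case False
      have "(\<Sum>w\<in>U. lam g * y' g w) = (\<Sum>w\<in>U. lam g * y g w - (if w = v then (if y g v = 1 then lam g else 0) else 0))"
        using False y'g by (intro sum.cong) auto
      also have "\<dots> = (\<Sum>w\<in>U. lam g * y g w) - (if y g v = 1 then lam g else 0)"
        using vU finU by (simp add: sum_subtractf)
      finally show ?thesis by simp
    qed
    have phi: "Phi y \<le> Phi y' + mca_load F lam y v"
    proof -
      have "Phi y \<le> (\<Sum>g\<in>F. (\<Sum>w\<in>U. lam g * y' g w) + (if y g v = 1 then lam g else 0))"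
        unfolding Phi_def by (rule sum_mono) (use Tg in auto)
      also have "\<dots> = Phi y' + mca_load F lam y v" unfolding Phi_def load_sum by (simp add: sum.distrib)
      finally show ?thesis .
    qed
    have Dsub: "insert v (Dn y) \<subseteq> Dn y'"
    proof -
      have "\<forall>g. (g,v) \<notin> mca_edges F U y'"
      proof (intro allI notI)
        fix g assume g: "(g,v) \<in> mca_edges F U y'"
        then have "g \<noteq> f" using y'g unfolding mca_edges_def by auto
        moreover have "(g,v) \<in> mca_edges F U y" using g edges_sub by auto
        ultimately show False using only by auto
      qed
      then show ?thesis unfolding Dn_def using edges_sub vU by auto
    qed
    have loadeq: "mca_load F lam y' w = mca_load F lam y w" if "w \<in> Dn y" for w
    proof -
      have wv: "w \<noteq> v" using that vnD by auto
      have wU: "w \<in> U" using that unfolding Dn_def by auto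
      have "y f w + y f v \<le> 1"
      proof -
        have "(\<Sum>u\<in>{w,v}. y f u) \<le> (\<Sum>u\<in>U. y f u)"
          by (rule sum_mono2) (use finU wU vU rngy fF in auto)
        then show ?thesis using sumy[OF fF] wv by simp
      qed
      then have "y f w \<noteq> 1" using yfv by auto
      then show ?thesis unfolding load_sum using y'g wv by (intro sum.cong) auto
    qed
    have loadv: "lam f \<le> mca_load F lam y' v"
    proof -
      have "(if y' f v = 1 then lam f else 0) \<le> (\<Sum>g\<in>F. if y' g v = 1 then lam g else 0)"
        by (rule member_le_sum[OF fF _ finF]) (use lampos in \<open>auto simp: less_imp_le\<close>)
      then show ?thesis unfolding load_sum using y'g by simp
    qed
    have "opt \<le> Phi y' + mca_load F lam y v + (\<Sum>w\<in>Dn y. mca_load F lam y w)" using IP phi by linarith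
    also have "\<dots> \<le> Phi y' + mca_load F lam y' v + (\<Sum>w\<in>Dn y. mca_load F lam y' w)"
    proof -
      have "mca_load F lam y v \<le> mca_load F lam y' v"
        using False loadv yfv lamf by (smt (verit) mult_left_le)
      moreover have "(\<Sum>w\<in>Dn y. mca_load F lam y w) = (\<Sum>w\<in>Dn y. mca_load F lam y' w)" using loadeq by simp
      ultimately show ?thesis by simp
    qed
    also have "\<dots> = Phi y' + (\<Sum>w\<in>insert v (Dn y). mca_load F lam y' w)" using Dins by simp
    also have "\<dots> \<le> Phi y' + (\<Sum>w\<in>Dn y'. mca_load F lam y' w)"
      using sum_mono2[OF finDn Dsub, of "mca_load F lam y'", OF load_nonneg] by simp
    finally have "opt \<le> Phi y' + (\<Sum>w\<in>Dn y'. mca_load F lam y' w)" .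
    then show ?thesis using rng fsum edges_sub suppy unfolding Inv_def by blast
  qed
qed


lemma phase1_Inv:
  assumes "(mca_phase1_step F U lam)\<^sup>*\<^sup>* y0 y" "Inv opt y0"
  shows "Inv opt y"
  using assms
proof (induction rule: rtranclp_induct)
  case base then show ?case by simp
next
  case (step y1 y2)
  then have "Inv opt y1" by simp
  then show ?case using step(2) step1_Inv step2_Inv unfolding mca_phase1_step_def by blast
qed

lemma init_Inv: "Inv (obj_Q2 F U Vf x) (\<lambda>f v. x f v / lam f)"
proof -
  have xnn: "0 \<le> x f v" for f v using feas unfolding feasible_Q2_def by auto
  have xz: "x f v = 0" if "f \<notin> F \<or> v \<notin> U \<or> v \<notin> Vf f" for f v using feas that unfolding feasible_Q2_def by auto
  have xs: "(\<Sum>v\<in>U. x f v) \<le> lam f" if "f \<in> F" for f using feas that unfolding feasible_Q2_def by auto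
  have lp: "0 < lam f" if "f \<in> F" for f using lampos that by auto
  have r1: "\<forall>f\<in>F. \<forall>v\<in>U. 0 \<le> x f v / lam f \<and> x f v / lam f \<le> 1"
  proof (intro ballI conjI)
    fix f v assume fF: "f \<in> F" and vU: "v \<in> U"
    show "0 \<le> x f v / lam f" using xnn lp[OF fF] by simp
    have "x f v \<le> (\<Sum>v\<in>U. x f v)" by (rule member_le_sum[OF vU _ finU]) (simp add: xnn)
    then have "x f v \<le> lam f" using xs[OF fF] by linarith
    then show "x f v / lam f \<le> 1" using lp[OF fF] by simp
  qed
  have r2: "\<forall>f\<in>F. (\<Sum>v\<in>U. x f v / lam f) \<le> 1"
  proof
    fix f assume fF: "f \<in> F"
    have "(\<Sum>v\<in>U. x f v / lam f) = (\<Sum>v\<in>U. x f v) / lam f" by (simp add: sum_divide_distrib)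
    then show "(\<Sum>v\<in>U. x f v / lam f) \<le> 1" using xs[OF fF] lp[OF fF] by simp
  qed
  have r3: "\<forall>f v. (f,v) \<in> mca_edges F U (\<lambda>f v. x f v / lam f) \<longrightarrow> 0 < x f v"
    unfolding mca_edges_def using lp xnn by (auto simp: zero_less_divide_iff dest: leD)
  have phi: "Phi (\<lambda>f v. x f v / lam f) = obj_Q2 F U Vf x"
  proof -
    have "Phi (\<lambda>f v. x f v / lam f) = (\<Sum>f\<in>F. \<Sum>v\<in>U. x f v)"
      unfolding Phi_def using lp by (intro sum.cong refl) (simp add: less_imp_neq[symmetric])
    also have "\<dots> = (\<Sum>f\<in>F. \<Sum>v\<in>Vf f \<inter> U. x f v)"
    proof (rule sum.cong[OF refl])
      fix f assume "f \<in> F"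
      show "(\<Sum>v\<in>U. x f v) = (\<Sum>v\<in>Vf f \<inter> U. x f v)"
        by (rule sum.mono_neutral_right[OF finU]) (use xz in auto)
    qed
    finally show ?thesis unfolding obj_Q2_def .
  qed
  have "(0::real) \<le> (\<Sum>v\<in>Dn (\<lambda>f v. x f v / lam f). mca_load F lam (\<lambda>f v. x f v / lam f) v)"
    by (rule sum_nonneg) (rule load_nonneg)
  then show ?thesis unfolding Inv_def using r1 r2 r3 phi by simp
qed

lemma final_bound:
  assumes I: "Inv opt y" and E: "mca_edges F U y = {}"
  shows "opt \<le> 2 * (\<Sum>f\<in>{f\<in>F. \<exists>v\<in>U. y f v = 1}. lam f)"
proof -
  define F1 where "F1 = {f\<in>F. \<exists>v\<in>U. y f v = 1}"
  have D: "Dn y = U" unfolding Dn_def using E by auto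
  have rngy: "0 \<le> y g w" "y g w \<le> 1" if "g \<in> F" "w \<in> U" for g w using I that unfolding Inv_def by auto
  have sumy: "(\<Sum>w\<in>U. y g w) \<le> 1" if "g \<in> F" for g using I that unfolding Inv_def by auto
  have b01: "y g w = 0 \<or> y g w = 1" if "g \<in> F" "w \<in> U" for g w
    using E rngy[OF that] that unfolding mca_edges_def by force
  have L: "(\<Sum>v\<in>U. mca_load F lam y v) = Phi y"
  proof -
    have "(\<Sum>v\<in>U. mca_load F lam y v) = (\<Sum>v\<in>U. \<Sum>g\<in>F. if y g v = 1 then lam g else 0)"
      by (simp add: load_sum)
    also have "\<dots> = (\<Sum>g\<in>F. \<Sum>v\<in>U. if y g v = 1 then lam g else 0)" by (rule sum.swap)
    also have "\<dots> = Phi y" unfolding Phi_def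
      by (intro sum.cong refl) (use b01 in force)
    finally show ?thesis .
  qed
  have P: "Phi y \<le> (\<Sum>f\<in>F1. lam f)"
  proof -
    have "Phi y = (\<Sum>g\<in>F. lam g * (\<Sum>v\<in>U. y g v))" unfolding Phi_def by (simp add: sum_distrib_left)
    also have "\<dots> \<le> (\<Sum>g\<in>F. if g \<in> F1 then lam g else 0)"
    proof (rule sum_mono)
      fix g assume gF: "g \<in> F"
      show "lam g * (\<Sum>v\<in>U. y g v) \<le> (if g \<in> F1 then lam g else 0)"
      proof (cases "g \<in> F1")
        case True
        then show ?thesis using sumy[OF gF] lampos gF by (simp add: mult_left_le)
      next
        case False
        then have "\<forall>v\<in>U. y g v = 0" using b01 gF unfolding F1_def by auto
        then show ?thesis using False by simp
      qed
    qed
    also have "\<dots> = (\<Sum>f\<in>F1. lam f)" unfolding F1_def using finF by (simp add: sum.inter_filter)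
    finally show ?thesis .
  qed
  have "opt \<le> Phi y + (\<Sum>v\<in>U. mca_load F lam y v)" using I D unfolding Inv_def by simp
  then show ?thesis using L P unfolding F1_def by simp
qed

end

lemma phase2_mono:
  assumes "mca_phase2 U Vf lam fs rem S0 rem' S"
  shows "S0 \<subseteq> S \<and> S \<subseteq> S0 \<union> set fs"
  using assms by (induction rule: mca_phase2.induct) auto

theorem lemma4:
  fixes V :: "'v set" and F :: "'f set" and Vf :: "'f \<Rightarrow> 'v set"
    and lam :: "'f \<Rightarrow> real" and c :: "'v \<Rightarrow> real" and U :: "'v set"
    and x y :: "'f \<Rightarrow> 'v \<Rightarrow> real" and fs :: "'f list"
    and rem' :: "'v \<Rightarrow> real" and S :: "'f set"
  assumes "finite V" and "finite F"
    and "\<forall>f\<in>F. 0 < lam f" and "\<forall>f\<in>F. Vf f \<subseteq> V" and "\<forall>v\<in>V. 0 < c v"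
    and "\<forall>f\<in>F. \<forall>v\<in>V. lam f \<le> c v"
    and "U \<subseteq> V"
    and "optimal_Q2 F U Vf lam c x" and "extreme_Q2 F U Vf lam c x"
    and "mca_phase1 F U lam x y"
    and "distinct fs"
    and "set fs = {f \<in> F. Vf f \<inter> U \<noteq> {} \<and> \<not> (\<exists>v\<in>U. y f v = 1)}"
    and "mca_phase2 U Vf lam fs (\<lambda>v. c v - mca_load F lam y v) {f \<in> F. \<exists>v\<in>U. y f v = 1} rem' S"
  shows "(\<Sum>f\<in>S. lam f) \<ge> OPT_Q2 F U Vf lam c / 2"
proof -
  have finU: "finite U" using assms(1,7) finite_subset by blast
  interpret M: mca F U Vf lam c x using assms(2,3,9) finU by unfold_locales auto
  have opt: "OPT_Q2 F U Vf lam c = obj_Q2 F U Vf x"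
    unfolding OPT_Q2_def
  proof (rule cSup_eq_maximum)
    show "obj_Q2 F U Vf x \<in> obj_Q2 F U Vf ` {x. feasible_Q2 F U Vf lam c x}"
      using assms(8) unfolding optimal_Q2_def by blast
    fix z assume "z \<in> obj_Q2 F U Vf ` {x. feasible_Q2 F U Vf lam c x}"
    then show "z \<le> obj_Q2 F U Vf x" using assms(8) unfolding optimal_Q2_def by blast
  qed
  have I: "M.Inv (obj_Q2 F U Vf x) y"
    using M.phase1_Inv[OF _ M.init_Inv] assms(10) unfolding mca_phase1_def by blast
  have E: "mca_edges F U y = {}" using assms(10) unfolding mca_phase1_def by blast
  define F1 where "F1 = {f\<in>F. \<exists>v\<in>U. y f v = 1}"
  have B: "obj_Q2 F U Vf x \<le> 2 * (\<Sum>f\<in>F1. lam f)" using M.final_bound[OF I E] unfolding F1_def .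
  have S: "F1 \<subseteq> S" "S \<subseteq> F" using phase2_mono[OF assms(13)] assms(12) unfolding F1_def by auto
  have finS: "finite S" using S(2) assms(2) finite_subset by blast
  have "(\<Sum>f\<in>F1. lam f) \<le> (\<Sum>f\<in>S. lam f)"
    by (rule sum_mono2[OF finS S(1)]) (use S(2) assms(3) in \<open>auto simp: less_imp_le\<close>)
  then show ?thesis using B opt by simp
qed

end
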